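(* Let $K=\{u\in L_1[0,1]: 0\le u\le 1 \text{ a.e.}\}$ with the norm $\|\cdot\|_1$, and define $T\colon K\to K$ a.e. on $[0,1]$ by $Tu(t)=\frac12u(t)\int_0^tu(s)\,ds$. Then $T$ is $\mathfrak{cm}$-nonexpansive: for all $n\in\mathbb{N}$, $v\in K$ and sequences $(u_i)_{i=1}^\infty\subset K$, $$\limsup_{i\to\infty}\sup_{A\subset\{1,\dots,n\}}\Big\|\sum_{k\in A}(Tu_{i+k}-Tv)\Big\|_1\le\limsup_{i\to\infty}\sup_{A\subset\{1,\dots,n\}}\Big\|\sum_{k\in A}(u_{i+k}-v)\Big\|_1.$$ *)

theory Defs
  imports "HOL-Analysis.Analysis"
begin

text \<open>Elements of L1[0,1] are represented by real functions on the reals; only their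
values on [0,1] (up to null sets) matter.\<close>

definition K01 :: "(real \<Rightarrow> real) set" where
  "K01 = {u. set_integrable lborel {0..1} u \<and>
              (AE t in lborel. t \<in> {0..1} \<longrightarrow> 0 \<le> u t \<and> u t \<le> 1)}"

definition norm1 :: "(real \<Rightarrow> real) \<Rightarrow> real" where
  "norm1 f = (LINT t:{0..1}|lborel. \<bar>f t\<bar>)"

definition Top :: "(real \<Rightarrow> real) \<Rightarrow> real \<Rightarrow> real" where
  "Top u t = 1/2 * u t * (LINT s:{0..t}|lborel. u s)"

end

theory Submission
  imports Defs
begin

lemma set_integral_sum_aux:
  fixes f :: "nat \<Rightarrow> real \<Rightarrow> real"
  assumes "finite B" "\<And>k. k \<in> B \<Longrightarrow> set_integrable M A (f k)"
  shows "set_integrable M A (\<lambda>t. \<Sum>k\<in>B. f k t)"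
    "(LINT t:A|M. (\<Sum>k\<in>B. f k t)) = (\<Sum>k\<in>B. LINT t:A|M. f k t)"
proof -
  have eq: "(\<lambda>x. indicator A x *\<^sub>R (\<Sum>k\<in>B. f k x)) = (\<lambda>x. \<Sum>k\<in>B. indicator A x *\<^sub>R f k x)"
    by (rule ext, rule scaleR_sum_right)
  have I: "\<And>k. k \<in> B \<Longrightarrow> integrable M (\<lambda>x. indicator A x *\<^sub>R f k x)"
    using assms(2) unfolding set_integrable_def by auto
  show "set_integrable M A (\<lambda>t. \<Sum>k\<in>B. f k t)"
    unfolding set_integrable_def eq by (rule Bochner_Integration.integrable_sum, rule I)
  show "(LINT t:A|M. (\<Sum>k\<in>B. f k t)) = (\<Sum>k\<in>B. LINT t:A|M. f k t)"
    unfolding set_lebesgue_integral_def eq by (rule Bochner_Integration.integral_sum, rule I)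
qed

lemma key_alg:
  fixes a d :: "nat \<Rightarrow> real"
  assumes "finite A" "\<And>k. k \<in> A \<Longrightarrow> 0 \<le> a k \<and> a k \<le> 1"
    "\<And>B. B \<subseteq> A \<Longrightarrow> \<bar>\<Sum>k\<in>B. d k\<bar> \<le> M"
  shows "\<bar>\<Sum>k\<in>A. a k * d k\<bar> \<le> M"
proof -
  define P where "P = {k\<in>A. 0 \<le> d k}"
  define N where "N = {k\<in>A. \<not> 0 \<le> d k}"
  have fP: "finite P" "finite N" using assms(1) by (auto simp: P_def N_def)
  have split: "(\<Sum>k\<in>A. a k * d k) = (\<Sum>k\<in>P. a k * d k) + (\<Sum>k\<in>N. a k * d k)"
  proof -
    have "A = P \<union> N" "P \<inter> N = {}" by (auto simp: P_def N_def)
    then show ?thesis using fP by (simp add: sum.union_disjoint)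
  qed
  have p1: "0 \<le> (\<Sum>k\<in>P. a k * d k)"
    by (rule sum_nonneg) (use assms(2) in \<open>auto simp: P_def\<close>)
  have p2: "(\<Sum>k\<in>P. a k * d k) \<le> (\<Sum>k\<in>P. d k)"
    by (rule sum_mono) (use assms(2) in \<open>auto simp: P_def intro: mult_left_le_one_le\<close>)
  have p3: "(\<Sum>k\<in>P. d k) \<le> M" using assms(3)[of P] by (auto simp: P_def)
  have n1: "(\<Sum>k\<in>N. a k * d k) \<le> 0"
    by (rule sum_nonpos) (use assms(2) in \<open>auto simp: N_def mult_nonneg_nonpos\<close>)
  have n2: "(\<Sum>k\<in>N. d k) \<le> (\<Sum>k\<in>N. a k * d k)"
  proof (rule sum_mono)
    fix k assume "k \<in> N"
    then have "d k < 0" "0 \<le> a k" "a k \<le> 1" using assms(2) by (auto simp: N_def)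
    then show "d k \<le> a k * d k" by (simp add: mult_le_cancel_right2)
  qed
  have n3: "- M \<le> (\<Sum>k\<in>N. d k)" using assms(3)[of N] by (auto simp: N_def)
  show ?thesis using split p1 p2 p3 n1 n2 n3 by linarith
qed

lemma mono_set_abs:
  fixes g :: "real \<Rightarrow> real"
  assumes "set_integrable lborel {0..1} g" "t \<le> 1"
  shows "(LINT s:{0..t}|lborel. \<bar>g s\<bar>) \<le> (LINT s:{0..1}|lborel. \<bar>g s\<bar>)"
proof -
  have a1: "set_integrable lborel {0..1} (\<lambda>s. \<bar>g s\<bar>)" using assms(1) by (rule set_integrable_abs)
  have a2: "set_integrable lborel {0..t} (\<lambda>s. \<bar>g s\<bar>)"
    by (rule set_integrable_subset[OF a1]) (use assms(2) in auto)
  show ?thesis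
    using a1 a2 unfolding set_lebesgue_integral_def set_integrable_def
    by (rule_tac integral_mono) (use assms(2) in \<open>auto simp: indicator_def\<close>)
qed

lemma per_i:
  fixes w :: "nat \<Rightarrow> real \<Rightarrow> real" and v :: "real \<Rightarrow> real"
  assumes v: "v \<in> K01" and w: "\<And>k. w k \<in> K01" and S: "finite S" and AS: "A \<subseteq> S"
  shows "norm1 (\<lambda>t. \<Sum>k\<in>A. Top (w k) t - Top v t)
     \<le> Max ((\<lambda>A. norm1 (\<lambda>t. \<Sum>k\<in>A. w k t - v t)) ` Pow S)"
proof -
  define M where "M = Max ((\<lambda>A. norm1 (\<lambda>t. \<Sum>k\<in>A. w k t - v t)) ` Pow S)"
  define W where "W = (\<lambda>k t. LINT s:{0..t}|lborel. w k s)"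
  define V where "V = (\<lambda>t. LINT s:{0..t}|lborel. v s)"
  have fA: "finite A" using S AS by (rule finite_subset[rotated])
  have hM: "\<And>B. B \<subseteq> S \<Longrightarrow> norm1 (\<lambda>t. \<Sum>k\<in>B. w k t - v t) \<le> M"
    unfolding M_def by (rule Max_ge) (use S in auto)
  have M0: "0 \<le> M" using hM[of "{}"] by (simp add: norm1_def)
  have vi: "set_integrable lborel {0..1} v" and wi: "\<And>k. set_integrable lborel {0..1} (w k)"
    using v w by (auto simp: K01_def)
  have di: "\<And>(B::nat set) X. finite B \<Longrightarrow> X \<subseteq> {0..1} \<Longrightarrow> X \<in> sets lborel \<Longrightarrow> set_integrable lborel X (\<lambda>s. \<Sum>k\<in>B. w k s - v s)
       \<and> (LINT s:X|lborel. (\<Sum>k\<in>B. w k s - v s)) = (\<Sum>k\<in>B. (LINT s:X|lborel. w k s) - (LINT s:X|lborel. v s))"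
  proof -
    fix B :: "nat set" and X assume B: "finite B" and X: "X \<subseteq> {0..1::real}" and Xm: "X \<in> sets lborel"
    have vX: "set_integrable lborel X v" and wX: "\<And>k. set_integrable lborel X (w k)"
      using set_integrable_subset[OF vi Xm X] set_integrable_subset[OF wi Xm X] by auto
    have ik: "\<And>k. set_integrable lborel X (\<lambda>s. w k s - v s)"
      using wX vX by (rule set_integral_diff(1))
    show "set_integrable lborel X (\<lambda>s. \<Sum>k\<in>B. w k s - v s)
       \<and> (LINT s:X|lborel. (\<Sum>k\<in>B. w k s - v s)) = (\<Sum>k\<in>B. (LINT s:X|lborel. w k s) - (LINT s:X|lborel. v s))"
      using set_integral_sum_aux[OF B, of lborel X "\<lambda>k s. w k s - v s"] ik
        set_integral_diff(2)[OF wX vX] by simp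
  qed
  have hW: "\<And>t B. t \<in> {0..1} \<Longrightarrow> B \<subseteq> S \<Longrightarrow> \<bar>\<Sum>k\<in>B. W k t - V t\<bar> \<le> M"
  proof -
    fix t :: real and B :: "nat set" assume t: "t \<in> {0..1}" and B: "B \<subseteq> S"
    have fB: "finite B" using S B by (rule finite_subset[rotated])
    have d1: "set_integrable lborel {0..1} (\<lambda>s. \<Sum>k\<in>B. w k s - v s)" using di[OF fB, of "{0..1}"] by simp
    have d2: "set_integrable lborel {0..t} (\<lambda>s. \<Sum>k\<in>B. w k s - v s)"
      and eq: "(LINT s:{0..t}|lborel. (\<Sum>k\<in>B. w k s - v s)) = (\<Sum>k\<in>B. W k t - V t)"
      using di[OF fB, of "{0..t}"] t by (auto simp: W_def V_def)
    have "\<bar>\<Sum>k\<in>B. W k t - V t\<bar> \<le> (LINT s:{0..t}|lborel. \<bar>\<Sum>k\<in>B. w k s - v s\<bar>)"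
      using set_integral_norm_bound[OF d2] eq by simp
    also have "\<dots> \<le> (LINT s:{0..1}|lborel. \<bar>\<Sum>k\<in>B. w k s - v s\<bar>)"
      using mono_set_abs[OF d1] t by simp
    also have "\<dots> \<le> M" using hM[OF B] by (simp add: norm1_def)
    finally show "\<bar>\<Sum>k\<in>B. W k t - V t\<bar> \<le> M" .
  qed
  have hV: "\<And>t. t \<in> {0..1} \<Longrightarrow> \<bar>V t\<bar> \<le> 1"
  proof -
    fix t :: real assume t: "t \<in> {0..1}"
    have "\<bar>V t\<bar> \<le> (LINT s:{0..t}|lborel. \<bar>v s\<bar>)"
      unfolding V_def using set_integral_norm_bound[of lborel "{0..t}" v] 
        set_integrable_subset[OF vi, of "{0..t}"] t by simp
    also have "\<dots> \<le> (LINT s:{0..1}|lborel. \<bar>v s\<bar>)"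
      using mono_set_abs[OF vi] t by simp
    also have "\<dots> \<le> (LINT s:{0..1::real}|lborel. (1::real))"
    proof (rule set_integral_mono_AE[where f="\<lambda>s. \<bar>v s\<bar>" and g="\<lambda>s. 1"])
      show "set_integrable lborel {0..1} (\<lambda>s. \<bar>v s\<bar>)" using vi by (rule set_integrable_abs)
      show "set_integrable lborel {0..1::real} (\<lambda>s. 1::real)"
        by (rule borel_integrable_atLeastAtMost'[OF continuous_on_const])
      show "AE x\<in>{0..1} in lborel. \<bar>v x\<bar> \<le> 1"
        using v unfolding K01_def by (auto elim!: eventually_mono)
    qed
    also have "\<dots> = 1" by (simp add: set_integral_const)
    finally show "\<bar>V t\<bar> \<le> 1" .
  qed
  have AEw: "AE t in lborel. \<forall>k\<in>A. t \<in> {0..1} \<longrightarrow> 0 \<le> w k t \<and> w k t \<le> 1"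
    by (rule AE_finite_allI[OF fA]) (use w in \<open>auto simp: K01_def\<close>)
  have AEb: "AE t in lborel. t \<in> {0..1} \<longrightarrow>
      \<bar>\<Sum>k\<in>A. Top (w k) t - Top v t\<bar> \<le> 1/2 * (\<bar>\<Sum>k\<in>A. w k t - v t\<bar> + M)"
    using AEw
  proof (rule eventually_mono)
    fix t assume H: "\<forall>k\<in>A. t \<in> {0..1} \<longrightarrow> 0 \<le> w k t \<and> w k t \<le> 1"
    show "t \<in> {0..1} \<longrightarrow>
      \<bar>\<Sum>k\<in>A. Top (w k) t - Top v t\<bar> \<le> 1/2 * (\<bar>\<Sum>k\<in>A. w k t - v t\<bar> + M)"
    proof
      assume t: "t \<in> {0..1}"
      have "(\<Sum>k\<in>A. Top (w k) t - Top v t)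
          = (\<Sum>k\<in>A. 1/2 * (V t * (w k t - v t) + w k t * (W k t - V t)))"
        by (rule sum.cong) (simp_all add: Top_def W_def V_def algebra_simps)
      also have "\<dots> = 1/2 * (V t * (\<Sum>k\<in>A. w k t - v t) + (\<Sum>k\<in>A. w k t * (W k t - V t)))"
        by (simp only: sum_distrib_left[symmetric] sum.distrib)
      finally have e: "(\<Sum>k\<in>A. Top (w k) t - Top v t)
          = 1/2 * (V t * (\<Sum>k\<in>A. w k t - v t) + (\<Sum>k\<in>A. w k t * (W k t - V t)))" .
      have b1: "\<bar>V t * (\<Sum>k\<in>A. w k t - v t)\<bar> \<le> \<bar>\<Sum>k\<in>A. w k t - v t\<bar>"
        unfolding abs_mult using hV[OF t] by (simp add: mult_left_le_one_le)
      have b2: "\<bar>\<Sum>k\<in>A. w k t * (W k t - V t)\<bar> \<le> M"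
        by (rule key_alg[OF fA]) (use H t hW AS in auto)
      show "\<bar>\<Sum>k\<in>A. Top (w k) t - Top v t\<bar> \<le> 1/2 * (\<bar>\<Sum>k\<in>A. w k t - v t\<bar> + M)"
      proof -
        have tri: "\<bar>V t * (\<Sum>k\<in>A. w k t - v t) + (\<Sum>k\<in>A. w k t * (W k t - V t))\<bar>
          \<le> \<bar>V t * (\<Sum>k\<in>A. w k t - v t)\<bar> + \<bar>\<Sum>k\<in>A. w k t * (W k t - V t)\<bar>"
          by (rule abs_triangle_ineq)
        have h: "\<bar>1/2 * (V t * (\<Sum>k\<in>A. w k t - v t) + (\<Sum>k\<in>A. w k t * (W k t - V t)))\<bar>
          = 1/2 * \<bar>V t * (\<Sum>k\<in>A. w k t - v t) + (\<Sum>k\<in>A. w k t * (W k t - V t))\<bar>"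
          by (simp only: abs_mult)
        show ?thesis unfolding e h by (rule mult_left_mono) (use tri b1 b2 in linarith, simp)
      qed
    qed
  qed
  have dA: "set_integrable lborel {0..1} (\<lambda>s. \<Sum>k\<in>A. w k s - v s)" using di[OF fA, of "{0..1}"] by simp
  have cI: "set_integrable lborel {0..1::real} (\<lambda>s. M)"
    by (rule borel_integrable_atLeastAtMost'[OF continuous_on_const])
  have rI: "set_integrable lborel {0..1} (\<lambda>t. 1/2 * (\<bar>\<Sum>k\<in>A. w k t - v t\<bar> + M))"
    using set_integral_add(1)[OF set_integrable_abs[OF dA] cI] by simp
  have "norm1 (\<lambda>t. \<Sum>k\<in>A. Top (w k) t - Top v t)
      \<le> (LINT t:{0..1}|lborel. 1/2 * (\<bar>\<Sum>k\<in>A. w k t - v t\<bar> + M))"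
    unfolding norm1_def set_lebesgue_integral_def
  proof (rule integral_mono_AE')
    show "integrable lborel (\<lambda>t. indicator {0..1} t *\<^sub>R (1/2 * (\<bar>\<Sum>k\<in>A. w k t - v t\<bar> + M)))"
      using rI unfolding set_integrable_def .
    show "AE t in lborel. indicator {0..1} t *\<^sub>R \<bar>\<Sum>k\<in>A. Top (w k) t - Top v t\<bar>
        \<le> indicator {0..1} t *\<^sub>R (1/2 * (\<bar>\<Sum>k\<in>A. w k t - v t\<bar> + M))"
      using AEb by (rule eventually_mono) (auto simp: indicator_def)
    show "AE t in lborel. 0 \<le> indicator {0..1} t *\<^sub>R (1/2 * (\<bar>\<Sum>k\<in>A. w k t - v t\<bar> + M))"
      using M0 by (auto simp: indicator_def)
  qed
  also have "\<dots> = 1/2 * (norm1 (\<lambda>t. \<Sum>k\<in>A. w k t - v t) + M)"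
    using set_integral_add(2)[OF set_integrable_abs[OF dA] cI]
    by (simp add: norm1_def set_integral_const)
  also have "\<dots> \<le> M" using hM[OF AS] by simp
  finally show ?thesis unfolding M_def .
qed

theorem proposition6p2:
  fixes n :: nat and v :: "real \<Rightarrow> real" and u :: "nat \<Rightarrow> real \<Rightarrow> real"
  assumes "v \<in> K01" and "\<And>i. u i \<in> K01"
  shows "limsup (\<lambda>i. ereal (Max ((\<lambda>A. norm1 (\<lambda>t. \<Sum>k\<in>A. Top (u (i + k)) t - Top v t))
                                   ` Pow {1..n})))
       \<le> limsup (\<lambda>i. ereal (Max ((\<lambda>A. norm1 (\<lambda>t. \<Sum>k\<in>A. u (i + k) t - v t))
                                   ` Pow {1..n})))"
proof (rule Limsup_mono, rule always_eventually, rule allI)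
  fix i
  have "Max ((\<lambda>A. norm1 (\<lambda>t. \<Sum>k\<in>A. Top (u (i + k)) t - Top v t)) ` Pow {1..n})
     \<le> Max ((\<lambda>A. norm1 (\<lambda>t. \<Sum>k\<in>A. u (i + k) t - v t)) ` Pow {1..n})"
  proof (subst Max_le_iff, simp, blast, intro ballI)
    fix x assume "x \<in> (\<lambda>A. norm1 (\<lambda>t. \<Sum>k\<in>A. Top (u (i + k)) t - Top v t)) ` Pow {1..n}"
    then obtain A where A: "A \<subseteq> {1..n}" and x: "x = norm1 (\<lambda>t. \<Sum>k\<in>A. Top (u (i + k)) t - Top v t)"
      by auto
    show "x \<le> Max ((\<lambda>A. norm1 (\<lambda>t. \<Sum>k\<in>A. u (i + k) t - v t)) ` Pow {1..n})"
      unfolding x using per_i[of v "\<lambda>k. u (i + k)" "{1..n}" A] assms A by simp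
  qed
  then show "ereal (Max ((\<lambda>A. norm1 (\<lambda>t. \<Sum>k\<in>A. Top (u (i + k)) t - Top v t)) ` Pow {1..n}))
     \<le> ereal (Max ((\<lambda>A. norm1 (\<lambda>t. \<Sum>k\<in>A. u (i + k) t - v t)) ` Pow {1..n}))" by simp
qed

end
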